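(* Let $n\ge2$ and $0\le k\le n-2$ be integers, and let $\alpha\in I_{r,n+1}$ with $r>3+k$ and $\alpha_1=n-k$. Then $c^{(n+1)}_\alpha=0$.
   Context: Let $T_1,T_2,\dots$ be indeterminates, $T_\alpha=T_{\alpha_1}\cdots T_{\alpha_d}$. Define linear operators $L,H$ on monomials (constants sent to $0$): $L(T_{\alpha_1}\cdots T_{\alpha_r})=\sum_{1\le i<j\le r}T_{\alpha_1}\cdots T_{\alpha_i+1}\cdots T_{\alpha_j+1}\cdots T_{\alpha_r}$, $H(T_{\alpha_1}\cdots T_{\alpha_r})=-\frac12\sum_{k=1}^{r}\sum_{l=1}^{\alpha_k-1}\binom{\alpha_k}{l}T_{1+l}T_{1+\alpha_k-l}\prod_{i\ne k}T_{\alpha_i}$. For $n\ge2$ let $A_n=-\sum_{k=1}^{n-1}\binom{n}{k}T_{1+k}T_{1+n-k}T_n$; set $R_2=0$, $R_{n+1}=A_n+L(R_n)+H(R_n)$. $I_{r,n}$ is the set of non-increasing $r$-tuples of integers in $\{2,\dots,n-1\}$ with sum $2n$, and $c^{(n)}_\alpha$ is the coefficient of the monomial $T_\alpha$ in $R_n$. *)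

theory Defs
  imports Complex_Main "HOL-Library.Multiset"
begin

text \<open>Polynomials in the indeterminates T_1, T_2, ... with rational coefficients are
represented as finite formal sums: lists of terms (c, xs), where the term stands for
c * T_{xs!0} * ... * T_{xs!(length xs - 1)}.\<close>

type_synonym tpoly = "(rat \<times> nat list) list"

definition coeffT :: "tpoly \<Rightarrow> nat list \<Rightarrow> rat" where
  "coeffT p \<alpha> = sum_list [c. (c, xs) \<leftarrow> p, mset xs = mset \<alpha>]"

definition L_mono :: "rat \<times> nat list \<Rightarrow> tpoly" where
  "L_mono t = (case t of (c, xs) \<Rightarrow>
     [(c, xs[i := xs ! i + 1, j := xs ! j + 1]). i \<leftarrow> [0..<length xs], j \<leftarrow> [Suc i..<length xs]])"

definition L_op :: "tpoly \<Rightarrow> tpoly" where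
  "L_op p = concat (map L_mono p)"

definition H_mono :: "rat \<times> nat list \<Rightarrow> tpoly" where
  "H_mono t = (case t of (c, xs) \<Rightarrow>
     [(- (1/2) * c * of_nat ((xs ! k) choose l),
        (1 + l) # (1 + xs ! k - l) # (take k xs @ drop (Suc k) xs)).
        k \<leftarrow> [0..<length xs], l \<leftarrow> [1..<xs ! k]])"

definition H_op :: "tpoly \<Rightarrow> tpoly" where
  "H_op p = concat (map H_mono p)"

definition A_poly :: "nat \<Rightarrow> tpoly" where
  "A_poly n = [(- of_nat (n choose k), [1 + k, 1 + n - k, n]). k \<leftarrow> [1..<n]]"

text \<open>R_2 = 0 and R_{n+1} = A_n + L(R_n) + H(R_n) for n \<ge> 2 (R_0, R_1 are irrelevant and set to 0).\<close>
fun R_poly :: "nat \<Rightarrow> tpoly" where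
  "R_poly 0 = []"
| "R_poly (Suc n) = (if n < 2 then [] else A_poly n @ L_op (R_poly n) @ H_op (R_poly n))"

definition I_set :: "nat \<Rightarrow> nat \<Rightarrow> nat list set" where
  "I_set r n = {\<alpha>. length \<alpha> = r \<and> sorted_wrt (\<ge>) \<alpha> \<and> set \<alpha> \<subseteq> {2..n-1} \<and> sum_list \<alpha> = 2 * n}"

end

theory Submission
  imports Defs
begin

definition Pinv :: "nat \<Rightarrow> tpoly \<Rightarrow> bool" where
  "Pinv N p = (\<forall>t\<in>set p. \<forall>x\<in>set (snd t). x + length (snd t) \<le> N + 2)"

lemma set_upd_le:
  assumes "y \<in> set (xs[i := a, j := b])" "i < length xs" "j < length xs"
  shows "y \<in> set xs \<or> y = a \<or> y = b"
  using assms by (metis in_set_conv_nth length_list_update nth_list_update)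

lemma Pinv_L:
  assumes "Pinv N p" shows "Pinv (Suc N) (L_op p)"
  unfolding Pinv_def L_op_def
proof (intro ballI)
  fix t x assume t: "t \<in> set (concat (map L_mono p))" and x: "x \<in> set (snd t)"
  then obtain c xs where cx: "(c, xs) \<in> set p" and tm: "t \<in> set (L_mono (c, xs))"
    by auto
  from tm obtain i j where ij: "i < length xs" "j < length xs" "i < j"
    and teq: "t = (c, xs[i := xs ! i + 1, j := xs ! j + 1])"
  proof -
    from tm obtain i j where "i \<in> set [0..<length xs]" "j \<in> set [Suc i..<length xs]"
       "t = (c, xs[i := xs ! i + 1, j := xs ! j + 1])"
      unfolding L_mono_def by auto
    then show ?thesis by (intro that) auto
  qed
  have H: "\<forall>y\<in>set xs. y + length xs \<le> N + 2" using assms cx unfolding Pinv_def by auto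
  have "x \<in> set xs \<or> x = xs ! i + 1 \<or> x = xs ! j + 1"
    using set_upd_le[of x xs i "xs ! i + 1" j "xs ! j + 1"] x teq ij by auto
  moreover have "xs ! i \<in> set xs" "xs ! j \<in> set xs" using ij by auto
  ultimately show "x + length (snd t) \<le> Suc N + 2" using H teq by auto
qed

lemma Pinv_H:
  assumes "Pinv N p" shows "Pinv (Suc N) (H_op p)"
  unfolding Pinv_def H_op_def
proof (intro ballI)
  fix t x assume t: "t \<in> set (concat (map H_mono p))" and x: "x \<in> set (snd t)"
  then obtain c xs where cx: "(c, xs) \<in> set p" and tm: "t \<in> set (H_mono (c, xs))"
    by auto
  from tm obtain k l where kl: "k < length xs" "1 \<le> l" "l < xs ! k"
    and teq: "snd t = (1 + l) # (1 + xs ! k - l) # (take k xs @ drop (Suc k) xs)"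
    unfolding H_mono_def by auto
  have H: "\<forall>y\<in>set xs. y + length xs \<le> N + 2" using assms cx unfolding Pinv_def by auto
  have len: "length (snd t) = Suc (length xs)" using teq kl by auto
  have xk: "xs ! k \<in> set xs" using kl by auto
  have "x = 1 + l \<or> x = 1 + xs ! k - l \<or> x \<in> set xs"
    using x teq by (auto dest: in_set_takeD in_set_dropD)
  moreover have "1 + l \<le> xs ! k" "1 + xs ! k - l \<le> xs ! k" using kl by auto
  ultimately have "\<exists>y\<in>set xs. x \<le> y" using xk by auto
  then show "x + length (snd t) \<le> Suc N + 2" using H len by fastforce
qed

lemma Pinv_A: "Pinv (Suc n) (A_poly n)"
  unfolding Pinv_def A_poly_def by auto

lemma Pinv_R: "Pinv N (R_poly N)"
proof (induction N)
  case 0 then show ?case by (simp add: Pinv_def)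
next
  case (Suc n)
  show ?case
  proof (cases "n < 2")
    case True then show ?thesis by (simp add: Pinv_def)
  next
    case False
    have "Pinv (Suc n) (A_poly n @ L_op (R_poly n) @ H_op (R_poly n))"
      using Pinv_A Pinv_L[OF Suc.IH] Pinv_H[OF Suc.IH] unfolding Pinv_def by auto
    then show ?thesis using False by simp
  qed
qed

theorem mainTheorem11:
  fixes n k r :: nat and \<alpha> :: "nat list"
  assumes "n \<ge> 2" and "k \<le> n - 2"
    and "\<alpha> \<in> I_set r (n + 1)" and "r > 3 + k" and "\<alpha> ! 0 = n - k"
  shows "coeffT (R_poly (n + 1)) \<alpha> = 0"
proof -
  have len: "length \<alpha> = r" using assms(3) unfolding I_set_def by auto
  have a0: "n - k \<in> set \<alpha>" using assms(4,5) len by (metis gr_zeroI not_less_zero nth_mem)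
  have P: "Pinv (n + 1) (R_poly (n + 1))" by (rule Pinv_R)
  have none: "\<forall>t\<in>set (R_poly (n + 1)). mset (snd t) \<noteq> mset \<alpha>"
  proof
    fix t assume t: "t \<in> set (R_poly (n + 1))"
    show "mset (snd t) \<noteq> mset \<alpha>"
    proof
      assume m: "mset (snd t) = mset \<alpha>"
      then have "set (snd t) = set \<alpha>" by (metis set_mset_mset)
      moreover have "length (snd t) = length \<alpha>" using m by (metis size_mset)
      ultimately have "n - k + r \<le> n + 1 + 2"
        using P t a0 len unfolding Pinv_def by auto
      then show False using assms by linarith
    qed
  qed
  have gen: "\<And>p. \<forall>t\<in>set p. mset (snd t) \<noteq> mset \<alpha> \<Longrightarrow>
      [c. (c, xs) \<leftarrow> p, mset xs = mset \<alpha>] = []"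
    subgoal for p by (induction p) auto
    done
  have eq: "[c. (c, xs) \<leftarrow> R_poly (n + 1), mset xs = mset \<alpha>] = []"
    using gen[OF none] .
  show ?thesis unfolding coeffT_def eq by simp
qed

end
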